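(* Let $X$ be a locally path connected and semilocally simply connected space. Then the CO' topology on $\Pi_1(X)$ is coarser than the UC topology, i.e. every CO'-open subset of $\Pi_1(X)$ is UC-open. More precisely, for every CO'-open set $M\subseteq\Pi_1(X)$ and every $[\alpha]\in M$ there are open neighbourhoods $V^1$ of $\alpha(1)$ and $V^0$ of $\alpha(0)$ in $X$ with $N([\alpha],V^1,V^0)\subseteq M$.
   Context: For a space $X$, $\mathcal P X=C([0,1],X)$ is the set of paths, with the compact-open topology. For paths $\gamma,\eta$ with $\gamma(0)=\eta(1)$, $\gamma\,\Box\,\eta$ denotes the concatenated path which first traverses $\eta$ and then $\gamma$; $[\gamma]$ denotes the endpoint-fixing path-homotopy class of $\gamma$, and $\Pi_1(X)$ is the set of all such classes. A subset $V\subseteq X$ is relatively inessential if for $x\in V$ the homomorphism $\pi_1(V,x)\to\pi_1(X,x)$ induced by inclusion is trivial; $X$ is semilocally simply connected if every point has a relatively inessential neighbourhood. The CO' topology on $\Pi_1(X)$ is the quotient topology induced from $\mathcal P X$ by $q\colon\gamma\mapsto[\gamma]$. For $[\gamma]\in\Pi_1(X)$ and open sets $U\ni\gamma(1)$, $V\ni\gamma(0)$, let $N([\gamma],U,V)=\{[\delta\,\Box\,\gamma\,\Box\,\theta] : \delta\text{ a path in }U\text{ with }\delta(0)=\gamma(1),\ \theta\text{ a path in }V\text{ with }\theta(1)=\gamma(0)\}$. The UC topology is the topology generated by the sets $N([\gamma],U,V)$ with $U,V$ path connected relatively inessential open neighbourhoods of $\gamma(1)$, $\gamma(0)$. *)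

theory Defs
  imports "HOL-Analysis.Analysis"
begin

text \<open>The space X is the whole carrier of a topological_space type 'a.
  Paths are maps real => 'a continuous on [0,1] (library notion path);
  only their values on [0,1] matter.\<close>

definition path_space :: "(real \<Rightarrow> 'a::topological_space) set" where
  "path_space = {g. path g}"

definition compact_open_path_topology :: "(real \<Rightarrow> 'a::topological_space) topology" where
  "compact_open_path_topology =
     topology_generated_by
       {{g. path g \<and> g ` K \<subseteq> U} | K U. compact K \<and> K \<subseteq> {0..1} \<and> open U}"

definition path_class :: "(real \<Rightarrow> 'a::topological_space) \<Rightarrow> (real \<Rightarrow> 'a) set" where
  "path_class g = {h. homotopic_paths UNIV g h}"

definition Pi1 :: "(real \<Rightarrow> 'a::topological_space) set set" where
  "Pi1 = {path_class g | g. path g}"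

text \<open>Relatively inessential subsets and semilocal simple connectivity.
  pi_1(V,x) -> pi_1(X,x) trivial: every loop in V at x is null-homotopic in X.\<close>
definition rel_inessential :: "'a::topological_space set \<Rightarrow> bool" where
  "rel_inessential V \<longleftrightarrow>
     (\<forall>x\<in>V. \<forall>p. path p \<and> path_image p \<subseteq> V \<and> pathstart p = x \<and> pathfinish p = x
        \<longrightarrow> homotopic_paths UNIV p (\<lambda>t. x))"

definition semilocally_simply_connected :: "'a::topological_space itself \<Rightarrow> bool" where
  "semilocally_simply_connected TYPE('a) \<longleftrightarrow>
     (\<forall>x::'a. \<exists>V. open V \<and> x \<in> V \<and> rel_inessential V)"

definition CO'_open :: "(real \<Rightarrow> 'a::topological_space) set set \<Rightarrow> bool" where
  "CO'_open M \<longleftrightarrow> M \<subseteq> Pi1 \<and>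
     openin compact_open_path_topology {g \<in> path_space. path_class g \<in> M}"

text \<open>N([g],U,V) = {[delta box g box theta]}; delta box g box theta first traverses theta,
  then g, then delta, i.e. (theta +++ g) +++ delta.\<close>
definition Nbhd :: "(real \<Rightarrow> 'a::topological_space) \<Rightarrow> 'a set \<Rightarrow> 'a set \<Rightarrow> (real \<Rightarrow> 'a) set set" where
  "Nbhd g U V =
     {path_class ((\<theta> +++ g) +++ \<delta>) | \<delta> \<theta>.
        path \<delta> \<and> path_image \<delta> \<subseteq> U \<and> pathstart \<delta> = pathfinish g \<and>
        path \<theta> \<and> path_image \<theta> \<subseteq> V \<and> pathfinish \<theta> = pathstart g}"

definition UC_topology :: "(real \<Rightarrow> 'a::topological_space) set topology" where
  "UC_topology =
     topology_generated_by
       {Nbhd g U V | g U V. path g \<and>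
          open U \<and> pathfinish g \<in> U \<and> path_connected U \<and> rel_inessential U \<and>
          open V \<and> pathstart g \<in> V \<and> path_connected V \<and> rel_inessential V}"

end

theory Submission
  imports Defs
begin

lemma gen_fin:
  assumes "generate_topology_on B S"
  shows "x \<in> S \<Longrightarrow> \<exists>F. finite F \<and> F \<subseteq> B \<and> x \<in> \<Inter>F \<and> \<Inter>F \<subseteq> S"
  using assms
proof (induction arbitrary: x rule: generate_topology_on.induct)
  case Empty then show ?case by simp
next
  case (Int a b)
  from Int.prems have xa: "x \<in> a" and xb: "x \<in> b" by auto
  obtain F1 where F1: "finite F1" "F1 \<subseteq> B" "x \<in> \<Inter>F1" "\<Inter>F1 \<subseteq> a" using Int.IH(1)[OF xa] by blast
  obtain F2 where F2: "finite F2" "F2 \<subseteq> B" "x \<in> \<Inter>F2" "\<Inter>F2 \<subseteq> b" using Int.IH(2)[OF xb] by blast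
  have "\<Inter>(F1 \<union> F2) \<subseteq> a \<inter> b" using F1(4) F2(4) by auto
  then show ?case using F1 F2 by (intro exI[of _ "F1 \<union> F2"]) auto
next
  case (UN K)
  then obtain k where k: "k \<in> K" "x \<in> k" by auto
  obtain F where "finite F" "F \<subseteq> B" "x \<in> \<Inter>F" "\<Inter>F \<subseteq> k" using UN.IH[OF k] by blast
  with k show ?case by (intro exI[of _ F]) auto
next
  case (Basis s)
  then show ?case by (intro exI[of _ "{s}"]) auto
qed

lemma path_class_eq:
  assumes H: "homotopic_paths UNIV g h"
  shows "path_class g = path_class h"
proof -
  have H': "homotopic_paths UNIV h g" using H by (rule homotopic_paths_sym)
  show ?thesis unfolding path_class_def
  proof (rule set_eqI)
    fix x
    show "x \<in> {x. homotopic_paths UNIV g x} \<longleftrightarrow> x \<in> {x. homotopic_paths UNIV h x}"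
      using homotopic_paths_trans[OF H, of x] homotopic_paths_trans[OF H', of x] by auto
  qed
qed

lemma join3_left: "s \<le> 1/4 \<Longrightarrow> ((p +++ q) +++ r) s = p (4 * s)"
  by (simp add: joinpaths_def)
lemma join3_mid: "1/4 < s \<Longrightarrow> s \<le> 1/2 \<Longrightarrow> ((p +++ q) +++ r) s = q (4 * s-1)"
  by (simp add: joinpaths_def)
lemma join3_right: "1/2 < s \<Longrightarrow> ((p +++ q) +++ r) s = r (2 * s-1)"
  by (simp add: joinpaths_def)

lemma fL:
  fixes e t :: real
  assumes "0 < e" "e \<le> 1/4" "0 \<le> t" "t \<le> e"
  shows "0 \<le> (t+1)/4 - max 0 (e-t)/(4*e) + max 0 (t-(1-e))/(2*e)"
    and "4 * ((t+1)/4 - max 0 (e-t)/(4*e) + max 0 (t-(1-e))/(2*e)) - 1 \<le> e"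
proof -
  have m2: "max 0 (t-(1-e))/(2*e) = 0" using assms by auto
  have m1: "max 0 (e-t)/(4*e) = (e-t)/(4*e)" using assms by auto
  have "(e-t)/(4*e) \<le> e/(4*e)"
    using assms by (intro divide_right_mono) auto
  also have "e/(4*e) = 1/4" using assms by simp
  finally have h: "(e-t)/(4*e) \<le> 1/4" .
  show "0 \<le> (t+1)/4 - max 0 (e-t)/(4*e) + max 0 (t-(1-e))/(2*e)"
  proof -
    have g: "0 \<le> (t+1)/4 - X + (0::real)" if "X \<le> 1/4" for X using assms(3) that by (simp add: field_simps)
    show ?thesis unfolding m1 m2 by (rule g[OF h])
  qed
  have q: "t/e \<le> 1" using assms by simp
  have r: "4 * ((t+1)/4 - (e-t)/(4*e)) - 1 = t + t/e - 1"
    using assms by (simp add: field_simps)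
  show "4 * ((t+1)/4 - max 0 (e-t)/(4*e) + max 0 (t-(1-e))/(2*e)) - 1 \<le> e"
  proof -
    have g: "4*(A + 0) - 1 \<le> e" if "4*A - 1 = t + Q - 1" "Q \<le> 1" "t \<le> e" for A Q :: real
    proof -
      have "4*(A + 0) - 1 = t + Q - 1" using that(1) by simp
      also have "\<dots> \<le> e" using that(2,3) by simp
      finally show ?thesis .
    qed
    show ?thesis unfolding m1 m2 by (rule g[OF r q assms(4)])
  qed
qed

lemma fR:
  fixes e t :: real
  assumes "0 < e" "e \<le> 1/4" "1 - e \<le> t" "t \<le> 1"
  shows "(2-e)/4 \<le> (t+1)/4 - max 0 (e-t)/(4*e) + max 0 (t-(1-e))/(2*e)"
    and "(t+1)/4 - max 0 (e-t)/(4*e) + max 0 (t-(1-e))/(2*e) \<le> 1"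
proof -
  have m1: "max 0 (e-t)/(4*e) = 0" using assms by auto
  have m2: "max 0 (t-(1-e))/(2*e) = (t-(1-e))/(2*e)" using assms by auto
  have a1: "0 \<le> (t-(1-e))/(2*e)" using assms by simp
  have "(t-(1-e))/(2*e) \<le> e/(2*e)" using assms by (intro divide_right_mono) auto
  also have "e/(2*e) = 1/2" using assms by simp
  finally have a2: "(t-(1-e))/(2*e) \<le> 1/2" .
  show "(2-e)/4 \<le> (t+1)/4 - max 0 (e-t)/(4*e) + max 0 (t-(1-e))/(2*e)"
  proof -
    have g: "(2-e)/4 \<le> (t+1)/4 - 0 + X" if "0 \<le> X" for X using assms(3) that by (simp add: field_simps)
    show ?thesis unfolding m1 m2 by (rule g[OF a1])
  qed
  show "(t+1)/4 - max 0 (e-t)/(4*e) + max 0 (t-(1-e))/(2*e) \<le> 1"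
  proof -
    have g: "(t+1)/4 - 0 + Y \<le> 1" if "Y \<le> 1/2" for Y using assms(4) that by (simp add: field_simps)
    show ?thesis unfolding m1 m2 by (rule g[OF a2])
  qed
qed

lemma fM:
  fixes e t :: real
  assumes "0 < e" "e \<le> t" "t \<le> 1 - e"
  shows "(t+1)/4 - max 0 (e-t)/(4*e) + max 0 (t-(1-e))/(2*e) = (t+1)/4"
  using assms by auto


lemma open_by_basis:
  assumes "\<And>p. p \<in> M \<Longrightarrow> \<exists>N\<in>B. p \<in> N \<and> N \<subseteq> M"
  shows "generate_topology_on B M"
proof -
  have eq: "M = \<Union>{N\<in>B. N \<subseteq> M}" using assms by blast
  have "generate_topology_on B (\<Union>{N\<in>B. N \<subseteq> M})"
    by (rule generate_topology_on.UN) (auto intro: generate_topology_on.Basis)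
  then show ?thesis by (subst eq)
qed

lemma rel_iness_mono: "rel_inessential V \<Longrightarrow> W \<subseteq> V \<Longrightarrow> rel_inessential W"
  unfolding rel_inessential_def by blast

lemma path_const_top: "path (\<lambda>t. a :: 'a::topological_space)"
  unfolding path_def by simp

lemma const_class:
  fixes \<alpha> :: "real \<Rightarrow> 'a::topological_space"
  assumes pa: "path \<alpha>"
  shows "path_class \<alpha> = path_class (((\<lambda>t. \<alpha> 0) +++ \<alpha>) +++ (\<lambda>t. \<alpha> 1))"
proof (rule path_class_eq, rule homotopic_paths_reparametrize[where f = "\<lambda>t. min 1 (max 0 (4 * t - 1))"])
  show "path \<alpha>" by (rule pa)
  show "path_image \<alpha> \<subseteq> UNIV" by simp
  show "continuous_on {0..1} (\<lambda>t::real. min 1 (max 0 (4 * t - 1)))"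
    by (intro continuous_intros)
  show "(\<lambda>t::real. min 1 (max 0 (4 * t - 1))) \<in> {0..1} \<rightarrow> {0..1}" by auto
  show "min 1 (max 0 (4 * 0 - 1)) = (0::real)" by simp
  show "min 1 (max 0 (4 * 1 - 1)) = (1::real)" by simp
  fix t :: real assume "t \<in> {0..1}"
  show "(((\<lambda>t. \<alpha> 0) +++ \<alpha>) +++ (\<lambda>t. \<alpha> 1)) t = \<alpha> (min 1 (max 0 (4 * t - 1)))"
  proof (cases "t \<le> 1/4")
    case True
    then have "min 1 (max 0 (4 * t - 1)) = (0::real)" by simp
    then show ?thesis using True by (simp add: join3_left)
  next
    case False
    show ?thesis
    proof (cases "t \<le> 1/2")
      case True
      then have "min 1 (max 0 (4 * t - 1)) = 4 * t - 1" using False by simp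
      then show ?thesis using True False by (simp add: join3_mid)
    next
      case F2: False
      then have "min 1 (max 0 (4 * t - 1)) = (1::real)" by simp
      then show ?thesis using F2 by (simp add: join3_right)
    qed
  qed
qed

lemma part2:
  fixes M :: "(real \<Rightarrow> 'a::topological_space) set set" and \<alpha> :: "real \<Rightarrow> 'a"
  assumes M: "CO'_open M" and pa: "path \<alpha>" and aM: "path_class \<alpha> \<in> M"
  shows "\<exists>V1 V0. open V1 \<and> \<alpha> 1 \<in> V1 \<and> open V0 \<and> \<alpha> 0 \<in> V0 \<and> Nbhd \<alpha> V1 V0 \<subseteq> M"
proof -
  define B :: "(real \<Rightarrow> 'a) set set" where
    "B = {{g. path g \<and> g ` K \<subseteq> U} | K U. compact K \<and> K \<subseteq> {0..1} \<and> open U}"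
  have "openin compact_open_path_topology {g \<in> path_space. path_class g \<in> M}"
    using M by (simp add: CO'_open_def)
  hence gen: "generate_topology_on B {g \<in> path_space. path_class g \<in> M}"
    unfolding compact_open_path_topology_def B_def by (rule openin_topology_generated_by)
  have "\<alpha> \<in> {g \<in> path_space. path_class g \<in> M}" using pa aM by (simp add: path_space_def)
  from gen_fin[OF gen this] obtain F where F: "finite F" "F \<subseteq> B" "\<alpha> \<in> \<Inter>F" "\<Inter>F \<subseteq> {g \<in> path_space. path_class g \<in> M}"
    by blast
  have "\<forall>S\<in>F. \<exists>KU. S = {g. path g \<and> g ` fst KU \<subseteq> snd KU} \<and> compact (fst KU) \<and> fst KU \<subseteq> {0..1} \<and> open (snd KU)"
  proof
    fix S assume "S \<in> F" then have "S \<in> B" using F(2) by blast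
    then obtain K0 U0 where "S = {g. path g \<and> g ` K0 \<subseteq> U0}" "compact K0" "K0 \<subseteq> {0..1}" "open U0"
      unfolding B_def by blast
    then show "\<exists>KU. S = {g. path g \<and> g ` fst KU \<subseteq> snd KU} \<and> compact (fst KU) \<and> fst KU \<subseteq> {0..1} \<and> open (snd KU)"
      by (intro exI[of _ "(K0,U0)"]) simp
  qed
  note ex = this
  obtain \<phi> where \<phi>: "\<forall>S\<in>F. S = {g. path g \<and> g ` fst (\<phi> S) \<subseteq> snd (\<phi> S)} \<and> compact (fst (\<phi> S)) \<and> fst (\<phi> S) \<subseteq> {0..1} \<and> open (snd (\<phi> S))"
    using bchoice[OF ex] by blast
  define K where "K S = fst (\<phi> S)" for S
  define U where "U S = snd (\<phi> S)" for S
  have Sdef: "\<And>S. S\<in>F \<Longrightarrow> S = {g. path g \<and> g ` K S \<subseteq> U S}"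
    and cK: "\<And>S. S\<in>F \<Longrightarrow> compact (K S)"
    and K01: "\<And>S. S\<in>F \<Longrightarrow> K S \<subseteq> {0..1}"
    and oU: "\<And>S. S\<in>F \<Longrightarrow> open (U S)"
    using \<phi> unfolding K_def U_def by auto
  have key: "path_class g \<in> M" if "path g" "\<And>S. S\<in>F \<Longrightarrow> g ` K S \<subseteq> U S" for g
  proof -
    have "\<And>S. S\<in>F \<Longrightarrow> g \<in> S" using that Sdef by blast
    then have "g \<in> \<Inter>F" by blast
    then show ?thesis using F(4) by blast
  qed
  have aKU: "\<alpha> ` K S \<subseteq> U S" if "S \<in> F" for S
  proof -
    have "\<alpha> \<in> S" using F(3) that by blast
    then show ?thesis using Sdef[OF that] by blast
  qed
  define V0 where "V0 = \<Inter>(U ` {S\<in>F. 0 \<in> K S})"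
  define V1 where "V1 = \<Inter>(U ` {S\<in>F. 1 \<in> K S})"
  have oV0: "open V0" unfolding V0_def using F(1) oU by (intro open_Inter) auto
  have oV1: "open V1" unfolding V1_def using F(1) oU by (intro open_Inter) auto
  have a0: "\<alpha> 0 \<in> V0" unfolding V0_def using aKU by blast
  have a1: "\<alpha> 1 \<in> V1" unfolding V1_def using aKU by blast
  define C0 where "C0 = \<Union>(K ` {S\<in>F. 0 \<notin> K S})"
  define C1 where "C1 = \<Union>(K ` {S\<in>F. 1 \<notin> K S})"
  have cC0: "closed C0" unfolding C0_def using F(1) cK by (intro closed_Union) (auto intro: compact_imp_closed)
  have cC1: "closed C1" unfolding C1_def using F(1) cK by (intro closed_Union) (auto intro: compact_imp_closed)
  have n0: "0 \<notin> C0" and n1: "1 \<notin> C1" by (auto simp: C0_def C1_def)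
  have cont: "continuous_on {0..1} \<alpha>" using pa by (simp add: path_def)
  obtain A0 where A0: "open A0" "0 \<in> A0" "\<And>y. y\<in>{0..1} \<Longrightarrow> y \<in> A0 \<Longrightarrow> \<alpha> y \<in> V0"
    using continuous_on_topological[THEN iffD1, OF cont, rule_format, of 0 V0] oV0 a0 by auto
  obtain A1 where A1: "open A1" "1 \<in> A1" "\<And>y. y\<in>{0..1} \<Longrightarrow> y \<in> A1 \<Longrightarrow> \<alpha> y \<in> V1"
    using continuous_on_topological[THEN iffD1, OF cont, rule_format, of 1 V1] oV1 a1 by auto
  have oA0: "open (A0 - C0)" using A0 cC0 by (simp add: open_Diff)
  obtain e0 where e0: "e0 > 0" "ball 0 e0 \<subseteq> A0 - C0"
    using open_contains_ball[THEN iffD1, OF oA0] A0(2) n0 by blast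
  have oA1: "open (A1 - C1)" using A1 cC1 by (simp add: open_Diff)
  obtain e1 where e1: "e1 > 0" "ball 1 e1 \<subseteq> A1 - C1"
    using open_contains_ball[THEN iffD1, OF oA1] A1(2) n1 by blast
  define \<epsilon> where "\<epsilon> = min (min e0 e1 / 2) (1/4)"
  have \<epsilon>: "0 < \<epsilon>" "\<epsilon> \<le> 1/4" "\<epsilon> < e0" "\<epsilon> < e1" using e0 e1 by (auto simp: \<epsilon>_def)
  have L0: "\<alpha> t \<in> V0 \<and> t \<notin> C0" if "0 \<le> t" "t \<le> \<epsilon>" for t
  proof -
    have "t \<in> ball 0 e0" using that \<epsilon> by (simp add: dist_real_def)
    then have "t \<in> A0 - C0" using e0 by blast
    moreover have "t \<in> {0..1}" using that \<epsilon> by auto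
    ultimately show ?thesis using A0 by blast
  qed
  have L1: "\<alpha> t \<in> V1 \<and> t \<notin> C1" if "1 - \<epsilon> \<le> t" "t \<le> 1" for t
  proof -
    have "t \<in> ball 1 e1" using that \<epsilon> by (simp add: dist_real_def)
    then have "t \<in> A1 - C1" using e1 by blast
    moreover have "t \<in> {0..1}" using that \<epsilon> by auto
    ultimately show ?thesis using A1 by blast
  qed
  show ?thesis
  proof (intro exI conjI subsetI, fact oV1, fact a1, fact oV0, fact a0)
    fix p assume "p \<in> Nbhd \<alpha> V1 V0"
    then obtain \<delta> \<theta> where p: "p = path_class ((\<theta> +++ \<alpha>) +++ \<delta>)"
      and d: "path \<delta>" "path_image \<delta> \<subseteq> V1" "pathstart \<delta> = pathfinish \<alpha>"
      and th: "path \<theta>" "path_image \<theta> \<subseteq> V0" "pathfinish \<theta> = pathstart \<alpha>"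
      unfolding Nbhd_def by blast
    define \<gamma> where "\<gamma> = (\<theta> +++ \<alpha>) +++ \<delta>"
    define f where "f t = (t+1)/4 - max 0 (\<epsilon>-t)/(4*\<epsilon>) + max 0 (t-(1-\<epsilon>))/(2*\<epsilon>)" for t :: real
    have p\<gamma>: "path \<gamma>" unfolding \<gamma>_def using d th pa by simp
    have contf: "continuous_on {0..1} f" unfolding f_def using \<epsilon> by (intro continuous_intros) auto
    have f0: "f 0 = 0" using \<epsilon> by (simp add: f_def)
    have f1: "f 1 = 1" using \<epsilon> by (simp add: f_def)
    have f01: "f \<in> {0..1} \<rightarrow> {0..1}"
    proof
      fix t :: real assume t: "t \<in> {0..1}"
      consider "t \<le> \<epsilon>" | "1-\<epsilon> \<le> t" | "\<epsilon> < t" "t < 1-\<epsilon>" by linarith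
      then show "f t \<in> {0..1}"
      proof cases
        case 1
        have "0 \<le> f t" "4 * f t - 1 \<le> \<epsilon>" unfolding f_def using fL[OF \<epsilon>(1,2) _ 1] t by auto
        then show ?thesis using \<epsilon> by auto
      next
        case 2
        have "(2-\<epsilon>)/4 \<le> f t" "f t \<le> 1" unfolding f_def using fR[OF \<epsilon>(1,2) 2] t by auto
        then show ?thesis using \<epsilon> by auto
      next
        case 3
        have "f t = (t+1)/4" unfolding f_def using fM[of \<epsilon> t] 3 \<epsilon> by auto
        then show ?thesis using t by auto
      qed
    qed
    have hom: "homotopic_paths UNIV \<gamma> (\<gamma> \<circ> f)"
      by (rule homotopic_paths_reparametrize[OF p\<gamma> _ contf f01 f0 f1]) auto
    have "path_class (\<gamma> \<circ> f) \<in> M"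
    proof (rule key)
      show "path (\<gamma> \<circ> f)" using hom homotopic_paths_imp_path by blast
      fix S assume S: "S \<in> F"
      show "(\<gamma> \<circ> f) ` K S \<subseteq> U S"
      proof
        fix y assume "y \<in> (\<gamma> \<circ> f) ` K S"
        then obtain t where t: "t \<in> K S" "y = \<gamma> (f t)" by auto
        have t01: "0 \<le> t" "t \<le> 1" using K01[OF S] t by auto
        consider "t \<le> \<epsilon>" | "1-\<epsilon> \<le> t" | "\<epsilon> < t" "t < 1-\<epsilon>" by linarith
        then show "y \<in> U S"
        proof cases
          case 1
          have "t \<notin> C0" using L0 t01 1 by blast
          hence "0 \<in> K S" using S t unfolding C0_def by blast
          hence sub: "V0 \<subseteq> U S" unfolding V0_def using S by blast
          have b1: "0 \<le> f t" "4 * f t - 1 \<le> \<epsilon>" unfolding f_def using fL[OF \<epsilon>(1,2) t01(1) 1] by auto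
          have "\<gamma> (f t) \<in> V0"
          proof (cases "f t \<le> 1/4")
            case True
            then have "\<gamma> (f t) = \<theta> (4 * f t)" unfolding \<gamma>_def by (rule join3_left)
            moreover have "\<theta> (4 * f t) \<in> path_image \<theta>" unfolding path_image_def using b1 True by auto
            ultimately show ?thesis using th by auto
          next
            case False
            then have "\<gamma> (f t) = \<alpha> (4 * f t - 1)" unfolding \<gamma>_def using b1 \<epsilon> by (intro join3_mid) auto
            moreover have "\<alpha> (4 * f t - 1) \<in> V0" using L0[of "4 * f t - 1"] False b1 by auto
            ultimately show ?thesis by simp
          qed
          then show ?thesis using sub t by auto
        next
          case 2
          have "t \<notin> C1" using L1 t01 2 by blast
          hence "1 \<in> K S" using S t unfolding C1_def by blast
          hence sub: "V1 \<subseteq> U S" unfolding V1_def using S by blast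
          have b1: "(2-\<epsilon>)/4 \<le> f t" "f t \<le> 1" unfolding f_def using fR[OF \<epsilon>(1,2) 2 t01(2)] by auto
          have "\<gamma> (f t) \<in> V1"
          proof (cases "f t \<le> 1/2")
            case True
            then have "\<gamma> (f t) = \<alpha> (4 * f t - 1)" unfolding \<gamma>_def using b1 \<epsilon> by (intro join3_mid) auto
            moreover have "\<alpha> (4 * f t - 1) \<in> V1" using L1[of "4 * f t - 1"] True b1 by auto
            ultimately show ?thesis by simp
          next
            case False
            then have "\<gamma> (f t) = \<delta> (2 * f t - 1)" unfolding \<gamma>_def by (intro join3_right) auto
            moreover have "\<delta> (2 * f t - 1) \<in> path_image \<delta>" unfolding path_image_def using b1 False by auto
            ultimately show ?thesis using d by auto
          qed
          then show ?thesis using sub t by auto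
        next
          case 3
          have ft: "f t = (t+1)/4" unfolding f_def using fM[of \<epsilon> t] 3 \<epsilon> by auto
          have "\<gamma> (f t) = \<alpha> (4 * f t - 1)" unfolding \<gamma>_def using ft 3 \<epsilon> t01 by (intro join3_mid) auto
          also have "4 * f t - 1 = t" using ft by simp
          finally show ?thesis using aKU[OF S] t by auto
        qed
      qed
    qed
    moreover have "path_class \<gamma> = path_class (\<gamma> \<circ> f)" using hom by (rule path_class_eq)
    ultimately show "p \<in> M" using p \<gamma>_def by simp
  qed
qed

theorem lemma2p3:
  assumes "locally path_connected (UNIV :: 'a::topological_space set)"
    and "semilocally_simply_connected TYPE('a)"
    and "CO'_open (M :: (real \<Rightarrow> 'a) set set)"
  shows "openin UC_topology M \<and>
    (\<forall>\<alpha>. path \<alpha> \<and> path_class \<alpha> \<in> M \<longrightarrow>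
       (\<exists>V1 V0. open V1 \<and> \<alpha> 1 \<in> V1 \<and> open V0 \<and> \<alpha> 0 \<in> V0 \<and> Nbhd \<alpha> V1 V0 \<subseteq> M))"
proof
  show "\<forall>\<alpha>. path \<alpha> \<and> path_class \<alpha> \<in> M \<longrightarrow>
       (\<exists>V1 V0. open V1 \<and> \<alpha> 1 \<in> V1 \<and> open V0 \<and> \<alpha> 0 \<in> V0 \<and> Nbhd \<alpha> V1 V0 \<subseteq> M)"
    using part2[OF assms(3)] by blast
  show "openin UC_topology M"
    unfolding UC_topology_def openin_topology_generated_by_iff
  proof (rule open_by_basis)
    fix p assume pM: "p \<in> M"
    then obtain \<alpha> where pa: "path \<alpha>" and p: "p = path_class \<alpha>"
      using assms(3) by (auto simp: CO'_open_def Pi1_def)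
    then obtain V1 V0 where V: "open V1" "\<alpha> 1 \<in> V1" "open V0" "\<alpha> 0 \<in> V0" "Nbhd \<alpha> V1 V0 \<subseteq> M"
      using part2[OF assms(3)] pM by blast
    obtain W1 where W1: "open W1" "\<alpha> 1 \<in> W1" "rel_inessential W1"
      using assms(2) unfolding semilocally_simply_connected_def by blast
    obtain W0 where W0: "open W0" "\<alpha> 0 \<in> W0" "rel_inessential W0"
      using assms(2) unfolding semilocally_simply_connected_def by blast
    define U1 where "U1 = path_component_set (V1 \<inter> W1) (\<alpha> 1)"
    define U0 where "U0 = path_component_set (V0 \<inter> W0) (\<alpha> 0)"
    have oU1: "open U1"
      using locally_path_connected_2[OF assms(1), of "V1 \<inter> W1" "\<alpha> 1"] V W1
      unfolding U1_def by (simp add: open_Int)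
    have oU0: "open U0"
      using locally_path_connected_2[OF assms(1), of "V0 \<inter> W0" "\<alpha> 0"] V W0
      unfolding U0_def by (simp add: open_Int)
    have iU1: "\<alpha> 1 \<in> U1" unfolding U1_def using V W1 by (simp add: path_component_refl)
    have iU0: "\<alpha> 0 \<in> U0" unfolding U0_def using V W0 by (simp add: path_component_refl)
    have sU1: "U1 \<subseteq> V1 \<inter> W1" unfolding U1_def by (rule path_component_subset)
    have sU0: "U0 \<subseteq> V0 \<inter> W0" unfolding U0_def by (rule path_component_subset)
    have cU1: "path_connected U1" and cU0: "path_connected U0" unfolding U1_def U0_def by simp_all
    have rU1: "rel_inessential U1" using rel_iness_mono[OF W1(3)] sU1 by blast
    have rU0: "rel_inessential U0" using rel_iness_mono[OF W0(3)] sU0 by blast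
    have Nsub: "Nbhd \<alpha> U1 U0 \<subseteq> Nbhd \<alpha> V1 V0"
      unfolding Nbhd_def using sU1 sU0 by blast
    have pN: "p \<in> Nbhd \<alpha> U1 U0"
    proof -
      have "p = path_class (((\<lambda>t. \<alpha> 0) +++ \<alpha>) +++ (\<lambda>t. \<alpha> 1))"
        using p const_class[OF pa] by simp
      then show ?thesis unfolding Nbhd_def using iU1 iU0
        by (intro CollectI exI[of _ "\<lambda>t. \<alpha> 1"] exI[of _ "\<lambda>t. \<alpha> 0"])
           (auto simp: path_const_top pathstart_def pathfinish_def)
    qed
    show "\<exists>N\<in>{Nbhd g U V | g U V. path g \<and>
          open U \<and> pathfinish g \<in> U \<and> path_connected U \<and> rel_inessential U \<and>
          open V \<and> pathstart g \<in> V \<and> path_connected V \<and> rel_inessential V}. p \<in> N \<and> N \<subseteq> M"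
      using pN Nsub V(5) pa oU1 oU0 iU1 iU0 cU1 cU0 rU1 rU0
      by (intro bexI[of _ "Nbhd \<alpha> U1 U0"]) (auto simp: pathstart_def pathfinish_def)
  qed
qed

end
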